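(* Let $I\subset\mathbb R$ be a bounded closed non-degenerate interval, $\xi=\frac12(\min I+\max I)$, and $f:I\to\mathbb R$ measurable. If for some $a,b,c\in\mathbb R$ one has $|f(x)-(ax+b)|\le c|x-\xi|$ for all $x\in I$, then $f\in L^\infty(I)$ and $|\tau_r^f-f(\xi)|\le\frac12c\,\lambda(I)$ for every $r>1$.
   Context: $\lambda$ is Lebesgue measure. For $h\in L^r(I)$ with $r>1$, $\tau_r^h$ denotes the unique real number minimizing $t\mapsto\|h-t\|_{L^r(I)}$. *)

theory Defs
  imports "HOL-Analysis.Analysis"
begin

definition Lr_norm :: "real set \<Rightarrow> real \<Rightarrow> (real \<Rightarrow> real) \<Rightarrow> real" where
  "Lr_norm I r h = (\<integral>x\<in>I. \<bar>h x\<bar> powr r \<partial>lebesgue) powr (1 / r)"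

definition in_Linf :: "real set \<Rightarrow> (real \<Rightarrow> real) \<Rightarrow> bool" where
  "in_Linf I h \<longleftrightarrow> h \<in> borel_measurable (restrict_space lebesgue I)
      \<and> (\<exists>M. AE x in lebesgue. x \<in> I \<longrightarrow> \<bar>h x\<bar> \<le> M)"

definition tau :: "real set \<Rightarrow> real \<Rightarrow> (real \<Rightarrow> real) \<Rightarrow> real" where
  "tau I r h = (THE t. \<forall>s. Lr_norm I r (\<lambda>x. h x - t) \<le> Lr_norm I r (\<lambda>x. h x - s))"

end

theory Submission
  imports Defs
begin


lemma pow_conv_nonneg:
  fixes r x y u :: real
  assumes r: "r \<ge> 1" and x: "x \<ge> 0" and y: "y \<ge> 0" and u: "0 \<le> u" "u \<le> 1"
  shows "(u*x + (1-u)*y) powr r \<le> u * x powr r + (1-u) * y powr r"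
proof (cases "x = 0 \<or> y = 0 \<or> u = 0 \<or> u = 1")
  case True
  then show ?thesis
  proof (elim disjE)
    assume "x = 0"
    have "((1-u)*y) powr r = (1-u) powr r * y powr r" using u y by (simp add: powr_mult)
    also have "\<dots> \<le> (1-u) powr 1 * y powr r"
      using u r by (intro mult_right_mono powr_mono') auto
    finally show ?thesis using \<open>x=0\<close> u by simp
  next
    assume "y = 0"
    have "(u*x) powr r = u powr r * x powr r" using u x by (simp add: powr_mult)
    also have "\<dots> \<le> u powr 1 * x powr r"
      using u r by (intro mult_right_mono powr_mono') auto
    finally show ?thesis using \<open>y=0\<close> u by simp
  qed auto
next
  case False
  then have "x > 0" "y > 0" "0 < u" "u < 1" using x y u by auto
  have "convex_on {0<..} (\<lambda>x. x powr r)" using powr_convex r by blast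
  then have "(\<lambda>x. x powr r) (u *\<^sub>R x + (1-u) *\<^sub>R y) \<le> u * x powr r + (1-u) * y powr r"
    unfolding convex_on_def using \<open>x > 0\<close> \<open>y > 0\<close> u by auto
  then show ?thesis by simp
qed

lemma pow_conv_abs:
  fixes r p q u :: real
  assumes r: "r \<ge> 1" and u: "0 \<le> u" "u \<le> 1"
  shows "\<bar>u*p + (1-u)*q\<bar> powr r \<le> u * \<bar>p\<bar> powr r + (1-u) * \<bar>q\<bar> powr r"
proof -
  have "\<bar>u*p + (1-u)*q\<bar> \<le> \<bar>u*p\<bar> + \<bar>(1-u)*q\<bar>" by (rule abs_triangle_ineq)
  also have "\<dots> = u*\<bar>p\<bar> + (1-u)*\<bar>q\<bar>" using u by (simp add: abs_mult)
  finally have "\<bar>u*p + (1-u)*q\<bar> \<le> u*\<bar>p\<bar> + (1-u)*\<bar>q\<bar>" .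
  then have "\<bar>u*p + (1-u)*q\<bar> powr r \<le> (u*\<bar>p\<bar> + (1-u)*\<bar>q\<bar>) powr r"
    using r by (intro powr_mono2) auto
  also have "\<dots> \<le> u * \<bar>p\<bar> powr r + (1-u) * \<bar>q\<bar> powr r"
    using pow_conv_nonneg[OF r _ _ u] by simp
  finally show ?thesis .
qed

lemma pow_strict_pos:
  fixes r x y :: real
  assumes r: "r > 1" and x: "0 < x" and xy: "x < y"
  shows "((x+y)/2) powr r < (x powr r + y powr r)/2"
proof -
  define m where "m = (x+y)/2"
  have xm: "x < m" and my: "m < y" using xy by (auto simp: m_def)
  have D: "\<And>z. 0 < z \<Longrightarrow> ((\<lambda>z. z powr r) has_real_derivative r * z powr (r - 1)) (at z)"
    by (rule has_real_derivative_powr)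
  obtain z1 where z1: "x < z1" "z1 < m" "m powr r - x powr r = (m - x) * (r * z1 powr (r-1))"
    using MVT2[OF xm, of "\<lambda>z. z powr r" "\<lambda>z. r * z powr (r - 1)"] D x by force
  obtain z2 where z2: "m < z2" "z2 < y" "y powr r - m powr r = (y - m) * (r * z2 powr (r-1))"
    using MVT2[OF my, of "\<lambda>z. z powr r" "\<lambda>z. r * z powr (r - 1)"] D x xm by force
  have "z1 powr (r-1) < z2 powr (r-1)"
    using z1 z2 x r by (intro powr_less_mono2) auto
  then have "r * z1 powr (r-1) < r * z2 powr (r-1)" using r by simp
  then have "(m - x) * (r * z1 powr (r-1)) < (m - x) * (r * z2 powr (r-1))"
    by (rule mult_strict_left_mono) (use xm in auto)
  moreover have "m - x = y - m" by (simp add: m_def field_simps)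
  ultimately have "(m - x) * (r * z1 powr (r-1)) < (y - m) * (r * z2 powr (r-1))" by metis
  then have "m powr r - x powr r < y powr r - m powr r" using z1(3) z2(3) by metis
  then have "m powr r < (x powr r + y powr r)/2" by (simp add: field_simps)
  then show ?thesis by (simp add: m_def)
qed

lemma pow_strict_nonneg:
  fixes r x y :: real
  assumes r: "r > 1" and x: "0 \<le> x" and xy: "x < y"
  shows "((x+y)/2) powr r < (x powr r + y powr r)/2"
proof (cases "x = 0")
  case True
  have y: "y > 0" using xy True by simp
  have "(y/2) powr r = y powr r / 2 powr r" using y by (simp add: powr_divide)
  also have "\<dots> < y powr r / 2"
  proof -
    have "2 powr 1 < (2::real) powr r" using r by (intro powr_less_mono) auto
    then show ?thesis using y by (intro divide_strict_left_mono) auto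
  qed
  finally show ?thesis using True by simp
next
  case False
  then show ?thesis using pow_strict_pos[OF r _ xy] x by simp
qed

lemma pow_strict_abs:
  fixes r p q :: real
  assumes r: "r > 1" and pq: "p \<noteq> q"
  shows "\<bar>(p+q)/2\<bar> powr r < (\<bar>p\<bar> powr r + \<bar>q\<bar> powr r)/2"
proof (cases "\<bar>p\<bar> = \<bar>q\<bar>")
  case True
  then have "q = -p" "p \<noteq> 0" using pq by auto
  then show ?thesis by simp
next
  case False
  have "\<bar>(p+q)/2\<bar> powr r \<le> ((\<bar>p\<bar>+\<bar>q\<bar>)/2) powr r"
    using r by (intro powr_mono2) auto
  also have "\<dots> < (\<bar>p\<bar> powr r + \<bar>q\<bar> powr r)/2"
  proof (cases "\<bar>p\<bar> < \<bar>q\<bar>")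
    case True
    then show ?thesis using pow_strict_nonneg[OF r _ True] by simp
  next
    case False
    then have qp: "\<bar>q\<bar> < \<bar>p\<bar>" using \<open>\<bar>p\<bar> \<noteq> \<bar>q\<bar>\<close> by simp
    show ?thesis using pow_strict_nonneg[OF r _ qp] by (simp add: add.commute)
  qed
  finally show ?thesis .
qed

lemma pair_mono:
  fixes r A0 B0 s t :: real
  assumes r: "r \<ge> 1" and h: "A0 + B0 \<le> 2 * s" and st: "s \<le> t"
  shows "\<bar>A0-s\<bar> powr r + \<bar>B0-s\<bar> powr r \<le> \<bar>A0-t\<bar> powr r + \<bar>B0-t\<bar> powr r"
proof (cases "s = t")
  case True then show ?thesis by simp
next
  case False
  define m where "m = (A0+B0)/2"
  define w where "w = 2 * m - t"
  have wt: "w < t" using h st False by (simp add: w_def m_def)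
  define u where "u = (s - w)/(t - w)"
  have u: "0 \<le> u" "u \<le> 1" using wt st h by (auto simp: u_def w_def m_def field_simps)
  have "u*(t-w) = s - w" using wt by (simp add: u_def)
  then have s_eq: "s = u*t + (1-u)*w" by (simp add: algebra_simps)
  have e1: "A0 - s = u*(A0-t) + (1-u)*(A0-w)" using s_eq by (simp add: algebra_simps)
  have e2: "B0 - s = u*(B0-t) + (1-u)*(B0-w)" using s_eq by (simp add: algebra_simps)
  have "A0 - w = -(B0 - t)" "B0 - w = -(A0 - t)" by (simp_all add: w_def m_def field_simps)
  then have sym1: "\<bar>A0-w\<bar> = \<bar>B0-t\<bar>" and sym2: "\<bar>B0-w\<bar> = \<bar>A0-t\<bar>"
    by simp_all
  have "\<bar>A0-s\<bar> powr r \<le> u * \<bar>A0-t\<bar> powr r + (1-u) * \<bar>B0-t\<bar> powr r"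
    using pow_conv_abs[OF r u, of "A0-t" "A0-w"] e1 sym1 by simp
  moreover have "\<bar>B0-s\<bar> powr r \<le> u * \<bar>B0-t\<bar> powr r + (1-u) * \<bar>A0-t\<bar> powr r"
    using pow_conv_abs[OF r u, of "B0-t" "B0-w"] e2 sym2 by simp
  ultimately show ?thesis by (simp add: algebra_simps)
qed



lemma powr_integrable:
  fixes g :: "real \<Rightarrow> real"
  assumes g: "g \<in> borel_measurable (lebesgue_on {lo..hi})" and K: "\<forall>x\<in>{lo..hi}. \<bar>g x\<bar> \<le> K" and r: "r > 0"
  shows "(\<lambda>x. \<bar>g x - t\<bar> powr r) integrable_on {lo..hi}"
proof (rule measurable_bounded_by_integrable_imp_integrable_real)
  show "(\<lambda>x. \<bar>g x - t\<bar> powr r) \<in> borel_measurable (lebesgue_on {lo..hi})" using g by measurable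
  show "(\<lambda>x. (K + \<bar>t\<bar>) powr r) integrable_on {lo..hi}" by (rule integrable_on_const) simp
  show "\<bar>\<bar>g x - t\<bar> powr r\<bar> \<le> (K + \<bar>t\<bar>) powr r" if "x \<in> {lo..hi}" for x
  proof -
    have "\<bar>g x - t\<bar> \<le> K + \<bar>t\<bar>" using K that by fastforce
    then show ?thesis using r by (simp add: powr_mono2)
  qed
qed simp

lemma reflect_integral:
  fixes F :: "real \<Rightarrow> real"
  assumes "F integrable_on {lo..hi}"
  shows "(\<lambda>x. F (lo + hi - x)) integrable_on {lo..hi}"
    "integral {lo..hi} (\<lambda>x. F (lo + hi - x)) = integral {lo..hi} F"
proof -
  have h: "(F has_integral integral {lo..hi} F) (cbox lo hi)" using assms by (simp add: integrable_integral)
  have "((\<lambda>x. F ((-1) *\<^sub>R x + (lo+hi))) has_integral (1 / (\<bar>-1\<bar> ^ DIM(real))) *\<^sub>R integral {lo..hi} F)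
     ((\<lambda>x. (1 / (-1)) *\<^sub>R x + -((1 / (-1)) *\<^sub>R (lo+hi))) ` cbox lo hi)"
    by (rule has_integral_affinity[OF h]) simp
  moreover have "((\<lambda>x. (1 / (-1)) *\<^sub>R x + -((1 / (-1)) *\<^sub>R (lo+hi))) ` cbox lo hi) = {lo..hi}"
  proof -
    have "(\<lambda>x::real. (1 / (-1)) *\<^sub>R x + -((1 / (-1)) *\<^sub>R (lo+hi))) = (\<lambda>x. lo + hi - x)" by auto
    moreover have "(\<lambda>x::real. lo + hi - x) ` {lo..hi} = {lo..hi}"
    proof
      show "(\<lambda>x::real. lo + hi - x) ` {lo..hi} \<subseteq> {lo..hi}" by auto
      show "{lo..hi} \<subseteq> (\<lambda>x::real. lo + hi - x) ` {lo..hi}"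
      proof
        fix y assume "y \<in> {lo..hi}"
        then show "y \<in> (\<lambda>x::real. lo + hi - x) ` {lo..hi}"
          by (intro image_eqI[of _ _ "lo + hi - y"]) auto
      qed
    qed
    ultimately show ?thesis by simp
  qed
  ultimately have "((\<lambda>x. F (lo + hi - x)) has_integral integral {lo..hi} F) {lo..hi}"
    by (simp add: algebra_simps)
  then show "(\<lambda>x. F (lo + hi - x)) integrable_on {lo..hi}"
    "integral {lo..hi} (\<lambda>x. F (lo + hi - x)) = integral {lo..hi} F"
    by (auto simp: integrable_on_def integral_unique)
qed

lemma meas_Icc: "lo \<le> hi \<Longrightarrow> measure lebesgue {lo..hi::real} = hi - lo"
  by (subst lmeasure_integral) auto

lemma integral_pos:
  fixes D :: "real \<Rightarrow> real"
  assumes D: "D integrable_on {lo..hi}" and pos: "\<forall>x\<in>{lo..hi}. D x > 0" and lh: "lo < hi"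
  shows "integral {lo..hi} D > 0"
proof -
  have ai: "D absolutely_integrable_on {lo..hi}"
    using D pos by (intro nonnegative_absolutely_integrable_1) (auto intro: less_imp_le)
  then have si: "set_integrable lebesgue {lo..hi} D" by (simp add: absolutely_integrable_on_def)
  have int: "integrable (lebesgue_on {lo..hi}) D"
    using si by (simp add: integrable_restrict_space set_integrable_def)
  have eq: "integral\<^sup>L (lebesgue_on {lo..hi}) D = integral {lo..hi} D"
    using int by (rule lebesgue_integral_eq_integral) simp
  have ge: "integral {lo..hi} D \<ge> 0" using D pos by (intro integral_nonneg) (auto intro: less_imp_le)
  show ?thesis
  proof (rule ccontr)
    assume "\<not> ?thesis"
    then have "integral\<^sup>L (lebesgue_on {lo..hi}) D = 0" using ge eq by simp
    then have "AE x in lebesgue_on {lo..hi}. D x = 0"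
      using integral_nonneg_eq_0_iff_AE[OF int] pos
      by (simp add: AE_restrict_space_iff less_imp_le)
    then have "AE x in lebesgue. x \<in> {lo..hi} \<longrightarrow> D x = 0"
      by (simp add: AE_restrict_space_iff)
    then have "AE x in lebesgue. x \<notin> {lo..hi}"
      by (rule AE_mp) (use pos in \<open>force intro!: AE_I2\<close>)
    then have "{lo..hi} \<in> null_sets lebesgue"
      by (simp add: AE_iff_null_sets)
    then have "measure lebesgue {lo..hi} = 0" by (simp add: null_sets_def measure_def)
    then show False using lh meas_Icc[of lo hi] by simp
  qed
qed



lemma cm_int: "(f::real\<Rightarrow>real) integrable_on S \<Longrightarrow> (\<lambda>x. c * f x) integrable_on S"
  using integrable_on_cmult_left[of f S c] by simp

lemma powr_inv_le_iff:
  fixes u v r :: real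
  assumes "0 \<le> u" "0 \<le> v" "r > 0"
  shows "u powr (1/r) \<le> v powr (1/r) \<longleftrightarrow> u \<le> v"
proof
  assume h: "u powr (1/r) \<le> v powr (1/r)"
  show "u \<le> v"
  proof (rule ccontr)
    assume "\<not> u \<le> v"
    then have "v powr (1/r) < u powr (1/r)" using assms by (intro powr_less_mono2) auto
    then show False using h by simp
  qed
next
  assume "u \<le> v" then show "u powr (1/r) \<le> v powr (1/r)" using assms by (intro powr_mono2) auto
qed

theorem proposition4:
  fixes lo hi a b c :: real and f :: "real \<Rightarrow> real"
  assumes "lo < hi"
    and "f \<in> borel_measurable (restrict_space lebesgue {lo..hi})"
    and "\<forall>x\<in>{lo..hi}. \<bar>f x - (a * x + b)\<bar> \<le> c * \<bar>x - (lo + hi) / 2\<bar>"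
  shows "in_Linf {lo..hi} f \<and>
    (\<forall>r>1. \<bar>tau {lo..hi} r f - f ((lo + hi) / 2)\<bar> \<le> 1/2 * c * measure lebesgue {lo..hi})"
proof -
  note lh = assms(1) and fm = assms(2) and H = assms(3)
  define xi where "xi = (lo + hi) / 2"
  define y0 where "y0 = a * xi + b"
  define L where "L = hi - lo"
  define M where "M = c * L / 2"
  have L0: "L > 0" using lh by (simp add: L_def)
  have H': "\<bar>f x - (a * x + b)\<bar> \<le> c * \<bar>x - xi\<bar>" if "x \<in> {lo..hi}" for x
    using H that unfolding xi_def by blast
  have xiI: "xi \<in> {lo..hi}" using lh by (simp add: xi_def)
  have fxi: "f xi = y0"
  proof -
    have "\<bar>f xi - (a * xi + b)\<bar> \<le> c * \<bar>xi - (lo + hi) / 2\<bar>" using H'[OF xiI] by (simp add: xi_def)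
    then have "\<bar>f xi - y0\<bar> \<le> 0" unfolding y0_def by (simp add: xi_def)
    then show ?thesis by simp
  qed
  have c0: "c \<ge> 0"
  proof -
    have "\<bar>f lo - (a * lo + b)\<bar> \<le> c * \<bar>lo - xi\<bar>" using H'[of lo] lh by auto
    then have "0 \<le> c * \<bar>lo - xi\<bar>" by (rule order_trans[OF abs_ge_zero])
    moreover have "\<bar>lo - xi\<bar> > 0" using lh by (simp add: xi_def)
    ultimately show ?thesis by (simp add: zero_le_mult_iff)
  qed
  have dist: "\<bar>x - xi\<bar> \<le> L / 2" if "x \<in> {lo..hi}" for x
    using that unfolding xi_def L_def abs_le_iff by (auto simp: field_simps)
  have errb: "\<bar>f x - (a * x + b)\<bar> \<le> M" if "x \<in> {lo..hi}" for x
  proof -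
    have "\<bar>f x - (a * x + b)\<bar> \<le> c * \<bar>x - xi\<bar>" by (rule H'[OF that])
    also have "\<dots> \<le> c * (L/2)" using dist[OF that] c0 by (rule mult_left_mono)
    finally show ?thesis by (simp add: M_def)
  qed
  define K where "K = \<bar>a\<bar> * (\<bar>lo\<bar> + \<bar>hi\<bar>) + \<bar>b\<bar> + M"
  have K: "\<bar>f x\<bar> \<le> K" if "x \<in> {lo..hi}" for x
  proof -
    have "\<bar>x\<bar> \<le> \<bar>lo\<bar> + \<bar>hi\<bar>" using that by auto
    then have "\<bar>a * x\<bar> \<le> \<bar>a\<bar> * (\<bar>lo\<bar> + \<bar>hi\<bar>)" by (simp add: abs_mult mult_left_mono)
    then show ?thesis using errb[OF that] unfolding K_def by linarith
  qed
  have K0: "K \<ge> 0" using K xiI by force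
  have Linf: "in_Linf {lo..hi} f"
    unfolding in_Linf_def using fm K by (auto intro!: exI[of _ K] AE_I2)
  have sym: "\<bar>f x + f (lo + hi - x) - 2 * y0\<bar> \<le> 2 * M" if "x \<in> {lo..hi}" for x
  proof -
    have x': "lo + hi - x \<in> {lo..hi}" using that by auto
    have "a * x + b + (a * (lo + hi - x) + b) = 2 * y0" by (simp add: y0_def xi_def algebra_simps)
    then show ?thesis using errb[OF that] errb[OF x'] by linarith
  qed
  have main: "\<bar>tau {lo..hi} r f - y0\<bar> \<le> M" if r: "r > 1" for r
  proof -
    define F where "F t x = \<bar>f x - t\<bar> powr r" for t x
    define \<phi> where "\<phi> t = integral {lo..hi} (F t)" for t
    have Fint: "F t integrable_on {lo..hi}" for t
      unfolding F_def using powr_integrable[of f lo hi K r t] fm K r by auto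
    have Fnn: "F t x \<ge> 0" for t x by (simp add: F_def)
    have \<phi>nn: "\<phi> t \<ge> 0" for t unfolding \<phi>_def using Fint Fnn by (intro integral_nonneg) auto
    have Lr: "Lr_norm {lo..hi} r (\<lambda>x. f x - t) = \<phi> t powr (1/r)" for t
    proof -
      have "F t absolutely_integrable_on {lo..hi}"
        using Fint Fnn by (intro nonnegative_absolutely_integrable_1) auto
      then have "set_integrable lebesgue {lo..hi} (F t)" by (simp add: absolutely_integrable_on_def)
      then have "(\<integral>x\<in>{lo..hi}. F t x \<partial>lebesgue) = integral {lo..hi} (F t)"
        by (rule set_lebesgue_integral_eq_integral(2))
      then show ?thesis unfolding Lr_norm_def \<phi>_def F_def by simp
    qed
    define P where "P t = (\<forall>s. \<phi> t \<le> \<phi> s)" for t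
    have Peq: "(\<forall>s. Lr_norm {lo..hi} r (\<lambda>x. f x - t) \<le> Lr_norm {lo..hi} r (\<lambda>x. f x - s)) \<longleftrightarrow> P t" for t
      unfolding Lr P_def using powr_inv_le_iff[OF \<phi>nn \<phi>nn] r by simp
    have tau_eq: "tau {lo..hi} r f = (THE t. P t)"
      unfolding tau_def using Peq by simp
    have conv: "convex_on UNIV \<phi>"
    proof (rule convex_onI)
      fix u x y :: real assume u: "0 < u" "u < 1"
      have "\<phi> ((1 - u) *\<^sub>R x + u *\<^sub>R y) \<le> integral {lo..hi} (\<lambda>z. (1-u) * F x z + u * F y z)"
        unfolding \<phi>_def
      proof (rule integral_le)
        show "F ((1 - u) *\<^sub>R x + u *\<^sub>R y) integrable_on {lo..hi}" by (rule Fint)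
        show "(\<lambda>z. (1-u) * F x z + u * F y z) integrable_on {lo..hi}"
          using Fint by (intro integrable_add cm_int)
        fix z
        have "f z - ((1 - u) *\<^sub>R x + u *\<^sub>R y) = (1-u) * (f z - x) + (1 - (1-u)) * (f z - y)"
          by (simp add: algebra_simps)
        then show "F ((1 - u) *\<^sub>R x + u *\<^sub>R y) z \<le> (1-u) * F x z + u * F y z"
          unfolding F_def using pow_conv_abs[of r "1-u" "f z - x" "f z - y"] r u by simp
      qed
      also have "\<dots> = (1-u) * \<phi> x + u * \<phi> y"
        unfolding \<phi>_def using Fint by (simp add: integral_add cm_int)
      finally show "\<phi> ((1 - u) *\<^sub>R x + u *\<^sub>R y) \<le> (1 - u) * \<phi> x + u * \<phi> y" .
    qed simp
    have cont: "continuous_on UNIV \<phi>" using conv by (intro convex_on_continuous) auto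
    have big: "\<phi> s \<ge> L * K powr r" if "\<bar>s\<bar> > 2 * K" for s
    proof -
      have "integral {lo..hi} (\<lambda>x. K powr r) \<le> \<phi> s"
        unfolding \<phi>_def
      proof (rule integral_le)
        fix x assume x: "x \<in> {lo..hi}"
        have "K \<le> \<bar>f x - s\<bar>" using K[OF x] that by linarith
        then show "K powr r \<le> F s x" unfolding F_def using K0 r by (intro powr_mono2) auto
      qed (auto simp: Fint)
      then show ?thesis using lh by (simp add: L_def)
    qed
    have small: "\<phi> 0 \<le> L * K powr r"
    proof -
      have "\<phi> 0 \<le> integral {lo..hi} (\<lambda>x. K powr r)"
        unfolding \<phi>_def
      proof (rule integral_le)
        fix x assume x: "x \<in> {lo..hi}"
        show "F 0 x \<le> K powr r" unfolding F_def using K[OF x] r by (intro powr_mono2) auto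
      qed (auto simp: Fint)
      then show ?thesis using lh by (simp add: L_def)
    qed
    have "\<exists>x\<in>{-2*K..2*K}. \<forall>y\<in>{-2*K..2*K}. \<phi> x \<le> \<phi> y"
    proof (rule continuous_attains_inf)
      show "continuous_on {-2*K..2*K} \<phi>" using cont by (rule continuous_on_subset) simp
    qed (use K0 in auto)
    then obtain t0 where t0: "t0 \<in> {-2*K..2*K}" "\<forall>y\<in>{-2*K..2*K}. \<phi> t0 \<le> \<phi> y"
      by blast
    have Pt0: "P t0"
      unfolding P_def
    proof
      fix s
      show "\<phi> t0 \<le> \<phi> s"
      proof (cases "s \<in> {-2*K..2*K}")
        case True then show ?thesis using t0 by blast
      next
        case False
        then have "\<bar>s\<bar> > 2 * K" by auto
        then have "\<phi> s \<ge> L * K powr r" by (rule big)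
        moreover have "\<phi> t0 \<le> \<phi> 0" using t0 K0 by auto
        ultimately show ?thesis using small by linarith
      qed
    qed
    have uniq: "t1 = t2" if P1: "P t1" and P2: "P t2" for t1 t2
    proof (rule ccontr)
      assume ne: "t1 \<noteq> t2"
      define m where "m = (t1 + t2) / 2"
      define D where "D x = (1/2) * F t1 x + (1/2) * F t2 x - F m x" for x
      have Dint: "D integrable_on {lo..hi}"
        unfolding D_def using Fint by (intro integrable_diff integrable_add cm_int)
      have Dpos: "\<forall>x\<in>{lo..hi}. D x > 0"
      proof
        fix x
        have e: "(f x - t1 + (f x - t2)) / 2 = f x - m" by (simp add: m_def field_simps)
        have "\<bar>(f x - t1 + (f x - t2)) / 2\<bar> powr r < (\<bar>f x - t1\<bar> powr r + \<bar>f x - t2\<bar> powr r) / 2"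
          using pow_strict_abs[OF r, of "f x - t1" "f x - t2"] ne by simp
        then have "\<bar>f x - m\<bar> powr r < (\<bar>f x - t1\<bar> powr r + \<bar>f x - t2\<bar> powr r) / 2"
          by (simp only: e)
        then show "D x > 0" unfolding D_def F_def by simp
      qed
      have "integral {lo..hi} D > 0" by (rule integral_pos[OF Dint Dpos lh])
      moreover have "integral {lo..hi} D = (1/2) * \<phi> t1 + (1/2) * \<phi> t2 - \<phi> m"
        unfolding D_def \<phi>_def using Fint
        by (simp add: integral_diff integral_add integrable_add cm_int)
      moreover have "\<phi> t1 \<le> \<phi> m" "\<phi> t2 \<le> \<phi> m" using P1 P2 by (auto simp: P_def)
      ultimately show False by linarith
    qed
    have ex1: "\<exists>!t. P t" using Pt0 uniq by blast
    have Ptau: "P (tau {lo..hi} r f)" unfolding tau_eq using theI'[OF ex1] .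
    have twice: "integral {lo..hi} (\<lambda>x. F t x + F t (lo + hi - x)) = 2 * \<phi> t" for t
      using Fint[of t] reflect_integral[OF Fint[of t]]
      by (simp add: integral_add \<phi>_def)
    have twice_int: "(\<lambda>x. F t x + F t (lo + hi - x)) integrable_on {lo..hi}" for t
      using Fint[of t] reflect_integral[OF Fint[of t]] by (intro integrable_add) auto
    have mono_up: "\<phi> s \<le> \<phi> t" if "y0 + M \<le> s" "s \<le> t" for s t
    proof -
      have "integral {lo..hi} (\<lambda>x. F s x + F s (lo + hi - x)) \<le> integral {lo..hi} (\<lambda>x. F t x + F t (lo + hi - x))"
      proof (rule integral_le[OF twice_int twice_int])
        fix x assume x: "x \<in> {lo..hi}"
        have "f x + f (lo + hi - x) \<le> 2 * s" using sym[OF x] that by linarith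
        then show "F s x + F s (lo + hi - x) \<le> F t x + F t (lo + hi - x)"
          unfolding F_def using pair_mono[of r "f x" "f (lo + hi - x)" s t] r that by simp
      qed
      then show ?thesis unfolding twice by simp
    qed
    have mono_down: "\<phi> s \<le> \<phi> t" if "s \<le> y0 - M" "t \<le> s" for s t
    proof -
      have "integral {lo..hi} (\<lambda>x. F s x + F s (lo + hi - x)) \<le> integral {lo..hi} (\<lambda>x. F t x + F t (lo + hi - x))"
      proof (rule integral_le[OF twice_int twice_int])
        fix x assume x: "x \<in> {lo..hi}"
        have "- f x + - f (lo + hi - x) \<le> 2 * (-s)" using sym[OF x] that by linarith
        then have "\<bar>- f x - - s\<bar> powr r + \<bar>- f (lo + hi - x) - - s\<bar> powr r
             \<le> \<bar>- f x - - t\<bar> powr r + \<bar>- f (lo + hi - x) - - t\<bar> powr r"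
          using pair_mono[of r "- f x" "- f (lo + hi - x)" "-s" "-t"] r that by simp
        moreover have "\<bar>- p - - q\<bar> = \<bar>p - q\<bar>" for p q :: real by linarith
        ultimately show "F s x + F s (lo + hi - x) \<le> F t x + F t (lo + hi - x)"
          unfolding F_def by metis
      qed
      then show ?thesis unfolding twice by simp
    qed
    define T where "T = tau {lo..hi} r f"
    have PT: "P T" using Ptau by (simp add: T_def)
    have "T \<le> y0 + M"
    proof (rule ccontr)
      assume "\<not> ?thesis"
      then have "\<phi> (y0 + M) \<le> \<phi> T" using mono_up by simp
      then have "P (y0 + M)" using PT by (auto simp: P_def intro: order_trans)
      then have "y0 + M = T" using uniq PT by blast
      then show False using \<open>\<not> T \<le> y0 + M\<close> by simp
    qed
    moreover have "y0 - M \<le> T"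
    proof (rule ccontr)
      assume "\<not> ?thesis"
      then have "\<phi> (y0 - M) \<le> \<phi> T" using mono_down by simp
      then have "P (y0 - M)" using PT by (auto simp: P_def intro: order_trans)
      then have "y0 - M = T" using uniq PT by blast
      then show False using \<open>\<not> y0 - M \<le> T\<close> by simp
    qed
    ultimately show ?thesis by (simp add: T_def abs_le_iff)
  qed
  have "measure lebesgue {lo..hi} = L" using meas_Icc[of lo hi] lh by (simp add: L_def)
  then have "1/2 * c * measure lebesgue {lo..hi} = M" by (simp add: M_def)
  then show ?thesis using Linf main fxi by (simp add: xi_def)
qed

end
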